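(* Let $(X,+)$ be an abelian group, $(g,\gamma)$ a construction pair on $(X,+)$, and $C=\langle b\rangle$ a cyclic group. The following are equivalent: (i) The formula $$(b^i,x)\cdot(b^j,y)=\Big(b^{i+j},\ g^{-j}(x)+y+\sum_{k\in I(i+j,-j)}g^{-k}(\gamma(x,y))\Big)\qquad(i,j\in\mathbb Z,\ x,y\in X)$$ correctly defines a multiplication on $C\times X$ (i.e., the right-hand side depends only on the elements $b^i,b^j\in C$ and not on the chosen exponents $i,j$). (ii) Either $C$ is infinite, or $C$ is finite, the order $|g|$ of $g$ (as a permutation) divides $|C|$, and $\sum_{0\le k<|C|}g^k(x)\in\mathrm{Rad}(\gamma)$ for every $x\in X$. (iii) Either $C$ is infinite, or $C$ is finite, $|g|$ divides $|C|$, and $r(g,\gamma)$ divides $|C|$.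
   Context: Let $(X,+)$ be an abelian group. A map $\gamma:X\times X\to X$ is symmetric if $\gamma(x,y)=\gamma(y,x)$, alternating if $\gamma(x,x)=0$, biadditive if additive in each argument. Its radical is $\mathrm{Rad}(\gamma)=\{x\in X:\gamma(x,y)=0\text{ for all }y\in X\}$. A construction pair on $(X,+)$ is a pair $(g,\gamma)$ where $g$ is a permutation of $X$ and $\gamma:X\times X\to X$ is symmetric, alternating and biadditive, such that for all $x,y,z\in X$: (C1) $g^{-1}(g(x)+g(y))=x+y+\gamma(x,y)+g^{-1}(\gamma(x,y))+g^{-2}(\gamma(x,y))$; (C2) $\gamma(\gamma(x,y),z)=0$; (C3) $g^{-1}(\gamma(x,y))=\gamma(g(x),y)$. For integers $i,j$ the interval $I(i,j)\subseteq\mathbb Z$ is $\emptyset$ if $i=j$, $\{i,i+1,\dots,j-1\}$ if $i<j$, and $\{j,j+1,\dots,i-1\}$ if $j<i$. For a construction pair $(g,\gamma)$, $r(g,\gamma)$ is the least positive integer $r$ such that $\sum_{0\le k<r}g^k(x)\in\mathrm{Rad}(\gamma)$ for every $x\in X$, and $r(g,\gamma)=\infty$ if no such $r$ exists. *)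

theory Defs
  imports "HOL-Algebra.Group"
begin

definition gpow :: "('a \<Rightarrow> 'a) \<Rightarrow> int \<Rightarrow> 'a \<Rightarrow> 'a" where
  "gpow g k = (if 0 \<le> k then g ^^ nat k else (inv_into UNIV g) ^^ nat (- k))"

definition symmetric_map :: "('a \<Rightarrow> 'a \<Rightarrow> 'a) \<Rightarrow> bool" where
  "symmetric_map \<gamma> \<longleftrightarrow> (\<forall>x y. \<gamma> x y = \<gamma> y x)"

definition alternating_map :: "('a::zero \<Rightarrow> 'a \<Rightarrow> 'a) \<Rightarrow> bool" where
  "alternating_map \<gamma> \<longleftrightarrow> (\<forall>x. \<gamma> x x = 0)"

definition biadditive :: "('a::plus \<Rightarrow> 'a \<Rightarrow> 'a) \<Rightarrow> bool" where
  "biadditive \<gamma> \<longleftrightarrow> (\<forall>x y z. \<gamma> (x + y) z = \<gamma> x z + \<gamma> y z) \<and>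
                       (\<forall>x y z. \<gamma> x (y + z) = \<gamma> x y + \<gamma> x z)"

definition Rad :: "('a::zero \<Rightarrow> 'a \<Rightarrow> 'a) \<Rightarrow> 'a set" where
  "Rad \<gamma> = {x. \<forall>y. \<gamma> x y = 0}"

definition construction_pair :: "('a::ab_group_add \<Rightarrow> 'a) \<Rightarrow> ('a \<Rightarrow> 'a \<Rightarrow> 'a) \<Rightarrow> bool" where
  "construction_pair g \<gamma> \<longleftrightarrow> bij g \<and> symmetric_map \<gamma> \<and> alternating_map \<gamma> \<and> biadditive \<gamma> \<and>
     (\<forall>x y. inv_into UNIV g (g x + g y) = x + y + \<gamma> x y + gpow g (-1) (\<gamma> x y) + gpow g (-2) (\<gamma> x y)) \<and>
     (\<forall>x y z. \<gamma> (\<gamma> x y) z = 0) \<and>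
     (\<forall>x y. inv_into UNIV g (\<gamma> x y) = \<gamma> (g x) y)"

definition Ival :: "int \<Rightarrow> int \<Rightarrow> int set" where
  "Ival i j = (if i \<le> j then {i..<j} else {j..<i})"

text \<open>Order of a permutation; 0 encodes infinite order.\<close>
definition perm_ord :: "('a \<Rightarrow> 'a) \<Rightarrow> nat" where
  "perm_ord g = (if \<exists>n>0. g ^^ n = id then (LEAST n. 0 < n \<and> g ^^ n = id) else 0)"

text \<open>r(g,gamma); 0 encodes infinity.\<close>
definition r_cp :: "('a::ab_group_add \<Rightarrow> 'a) \<Rightarrow> ('a \<Rightarrow> 'a \<Rightarrow> 'a) \<Rightarrow> nat" where
  "r_cp g \<gamma> = (if \<exists>r>0. \<forall>x. (\<Sum>k<r. (g ^^ k) x) \<in> Rad \<gamma>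
                then (LEAST r. 0 < r \<and> (\<forall>x. (\<Sum>k<r. (g ^^ k) x) \<in> Rad \<gamma>)) else 0)"

definition mult_snd :: "('a::ab_group_add \<Rightarrow> 'a) \<Rightarrow> ('a \<Rightarrow> 'a \<Rightarrow> 'a) \<Rightarrow> int \<Rightarrow> int \<Rightarrow> 'a \<Rightarrow> 'a \<Rightarrow> 'a" where
  "mult_snd g \<gamma> i j x y = gpow g (- j) x + y + (\<Sum>k\<in>Ival (i + j) (- j). gpow g (- k) (\<gamma> x y))"

end

theory Submission
  imports Defs "HOL-Algebra.Multiplicative_Group"
begin


lemma gpow_0[simp]: "gpow g 0 = id"
  by (simp add: gpow_def)

lemma gpow_nat[simp]: "gpow g (int n) = g ^^ n"
  by (simp add: gpow_def)

lemma gpow_succ: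
  assumes "bij g"
  shows "gpow g (k + 1) x = g (gpow g k x)"
proof -
  have gh: "g (inv_into UNIV g z) = z" for z using assms by (simp add: bij_def surj_f_inv_f)
  show ?thesis
  proof (cases "k \<ge> 0")
    case True
    then have "nat (k+1) = Suc (nat k)" by simp
    then show ?thesis using True by (simp add: gpow_def)
  next
    case False
    then have "nat (-k) = Suc (nat (-(k+1)))" by simp
    then show ?thesis using False by (auto simp add: gpow_def gh)
  qed
qed

lemma gpow_pred:
  assumes "bij g"
  shows "gpow g (k - 1) x = inv_into UNIV g (gpow g k x)"
proof -
  have hg: "inv_into UNIV g (g z) = z" for z using assms by (simp add: bij_def inv_into_f_f)
  have "gpow g k x = gpow g ((k - 1) + 1) x" by simp
  also have "\<dots> = g (gpow g (k-1) x)" by (rule gpow_succ[OF assms])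
  finally show ?thesis using hg by simp
qed

lemma gpow_add:
  assumes "bij g"
  shows "gpow g (a + b) x = gpow g a (gpow g b x)"
proof (induction a rule: int_induct[where k=0])
  case base then show ?case by simp
next
  case (step1 i)
  have "gpow g (i + 1 + b) x = gpow g ((i + b) + 1) x" by (simp add: algebra_simps)
  also have "\<dots> = g (gpow g (i+b) x)" by (rule gpow_succ[OF assms])
  finally show ?case using step1 gpow_succ[OF assms] by simp
next
  case (step2 i)
  have "gpow g (i - 1 + b) x = gpow g ((i + b) - 1) x" by (simp add: algebra_simps)
  also have "\<dots> = inv_into UNIV g (gpow g (i+b) x)" by (rule gpow_pred[OF assms])
  finally show ?case using step2 gpow_pred[OF assms] by simp
qed

lemma gpow_inv_cancel:
  assumes "bij g"
  shows "gpow g k (gpow g (-k) x) = x"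
  using gpow_add[OF assms, of k "-k" x] by simp

lemma periodic_ext:
  fixes f :: "int \<Rightarrow> 'b"
  assumes "\<And>a. f (a + p) = f a"
  shows "f (a + t * p) = f a"
proof (induction t arbitrary: a rule: int_induct[where k=0])
  case base then show ?case by simp
next
  case (step1 i)
  have "f (a + (i + 1) * p) = f ((a + i*p) + p)" by (simp add: algebra_simps)
  then show ?case using assms step1 by simp
next
  case (step2 i)
  have "f (a + (i - 1) * p) = f ((a + (i - 1)*p) + p)" using assms by simp
  also have "\<dots> = f (a + i * p)" by (simp add: algebra_simps)
  finally show ?case using step2 by simp
qed

lemma Ival_sym: "Ival a b = Ival b a"
  by (auto simp: Ival_def)

lemma Ival_split:
  assumes "a \<le> b" "b \<le> c"
  shows "sum u (Ival a c) = sum u (Ival a b) + sum u (Ival b c)"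
proof -
  have "{a..<c} = {a..<b} \<union> {b..<c}" using assms by auto
  then have "sum u {a..<c} = sum u {a..<b} + sum u {b..<c}"
    by (simp add: sum.union_disjoint)
  then show ?thesis using assms by (simp add: Ival_def)
qed

lemma Ival_cocycle:
  fixes u :: "int \<Rightarrow> 'a::ab_group_add"
  assumes tor: "\<And>k. u k + u k = 0"
  shows "sum u (Ival a c) = sum u (Ival a b) + sum u (Ival b c)"
proof -
  define W where "W a b = sum u (Ival a b)" for a b
  have sym: "W a b = W b a" for a b by (simp add: W_def Ival_sym)
  have t: "W a b + W a b = 0" for a b
  proof -
    have "W a b + W a b = sum (\<lambda>k. u k + u k) (Ival a b)" by (simp add: W_def sum.distrib)
    also have "\<dots> = 0" using tor by simp
    finally show ?thesis .
  qed
  have sp: "p \<le> q \<Longrightarrow> q \<le> r \<Longrightarrow> W p r = W p q + W q r" for p q r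
    unfolding W_def by (rule Ival_split)
  have t2: "x + (y + y) = x" if "y + y = 0" for x y :: 'a using that by simp
  have "W a c = W a b + W b c"
  proof -
    consider "a \<le> b" "b \<le> c" | "a \<le> c" "c \<le> b" | "b \<le> a" "a \<le> c"
      | "b \<le> c" "c \<le> a" | "c \<le> a" "a \<le> b" | "c \<le> b" "b \<le> a" by linarith
    then show ?thesis
    proof cases
      case 1 then show ?thesis using sp[OF 1] by simp
    next
      case 2
      then have "W a b = W a c + W c b" using sp[OF 2] by simp
      then have "W a b + W b c = W a c + (W c b + W c b)" using sym[of c b] by (simp add: add.assoc)
      then show ?thesis using t[of c b] by simp
    next
      case 3
      then have "W b c = W b a + W a c" using sp[OF 3] by simp
      then have "W a b + W b c = W a c + (W a b + W a b)" using sym[of a b] by (simp add: algebra_simps)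
      then show ?thesis using t[of a b] by simp
    next
      case 4
      then have "W b a = W b c + W c a" using sp[OF 4] by simp
      then have "W a b + W b c = W a c + (W b c + W b c)" using sym[of a b] sym[of c a] by (simp add: algebra_simps)
      then show ?thesis using t[of b c] by simp
    next
      case 5
      then have "W c b = W c a + W a b" using sp[OF 5] by simp
      then have "W a b + W b c = W a c + (W a b + W a b)" using sym[of b c] sym[of c a] by (simp add: algebra_simps)
      then show ?thesis using t[of a b] by simp
    next
      case 6
      then have "W c a = W c b + W b a" using sp[OF 6] by simp
      then show ?thesis using sym[of c b] sym[of c a] sym[of b a] by (simp add: algebra_simps)
    qed
  qed
  then show ?thesis by (simp add: W_def)
qed



definition Ssum :: "('a::ab_group_add \<Rightarrow> 'a) \<Rightarrow> nat \<Rightarrow> 'a \<Rightarrow> 'a" where "Ssum g m x = (\<Sum>k<m. (g ^^ k) x)"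

context
  fixes g :: "'a::ab_group_add \<Rightarrow> 'a" and \<gamma> :: "'a \<Rightarrow> 'a \<Rightarrow> 'a"
  assumes cp: "construction_pair g \<gamma>"
begin

lemma cp_bij: "bij g" using cp by (simp add: construction_pair_def)

lemma cp_addL: "\<gamma> (a + b) y = \<gamma> a y + \<gamma> b y"
  using cp by (simp add: construction_pair_def biadditive_def)
lemma cp_addR: "\<gamma> y (a + b) = \<gamma> y a + \<gamma> y b"
  using cp by (simp add: construction_pair_def biadditive_def)
lemma cp_sym: "\<gamma> a b = \<gamma> b a"
  using cp by (simp add: construction_pair_def symmetric_map_def)
lemma cp_alt: "\<gamma> a a = 0"
  using cp by (simp add: construction_pair_def alternating_map_def)
lemma cp_C3: "inv_into UNIV g (\<gamma> x y) = \<gamma> (g x) y"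
  using cp by (simp add: construction_pair_def)

lemma cp_zeroL[simp]: "\<gamma> 0 y = 0"
  using cp_addL[of 0 0 y] by simp
lemma cp_zeroR[simp]: "\<gamma> y 0 = 0"
  using cp_addR[of y 0 0] by simp
lemma cp_negL: "\<gamma> (- a) y = - \<gamma> a y"
  using cp_addL[of a "-a" y] by (simp add: eq_neg_iff_add_eq_0 add.commute)
lemma cp_diffL: "\<gamma> (a - b) y = \<gamma> a y - \<gamma> b y"
  using cp_addL[of a "-b" y] cp_negL[of b y] by simp
lemma cp_sumL: "\<gamma> (sum f A) y = sum (\<lambda>k. \<gamma> (f k) y) A"
  by (induction A rule: infinite_finite_induct) (simp_all add: cp_addL)

lemma cp_tor: "\<gamma> a b + \<gamma> a b = 0"
proof -
  have e: "\<gamma> (a+b) (a+b) = \<gamma> a a + \<gamma> a b + (\<gamma> b a + \<gamma> b b)" by (simp only: cp_addL cp_addR ac_simps)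
  have "\<gamma> a b + \<gamma> b a = 0" using e cp_alt[of "a+b"] cp_alt[of a] cp_alt[of b] by simp
  then show ?thesis by (metis cp_sym)
qed

lemma cp_gC: "g (\<gamma> x y) = \<gamma> (inv_into UNIV g x) y"
proof -
  have gh: "g (inv_into UNIV g z) = z" for z using cp_bij by (simp add: bij_def surj_f_inv_f)
  have "inv_into UNIV g (\<gamma> (inv_into UNIV g x) y) = \<gamma> x y" using cp_C3 gh by simp
  then have "g (inv_into UNIV g (\<gamma> (inv_into UNIV g x) y)) = g (\<gamma> x y)" by simp
  then show ?thesis using gh by simp
qed

lemma cp_gpow_gamma: "gpow g (- k) (\<gamma> x y) = \<gamma> (gpow g k x) y"
proof (induction k arbitrary: x rule: int_induct[where k=0])
  case base then show ?case by simp
next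
  case (step1 i)
  have "gpow g (- (i + 1)) (\<gamma> x y) = gpow g ((-i) - 1) (\<gamma> x y)" by simp
  also have "\<dots> = inv_into UNIV g (\<gamma> (gpow g i x) y)" using gpow_pred[OF cp_bij] step1 by simp
  also have "\<dots> = \<gamma> (gpow g (i+1) x) y" using cp_C3 gpow_succ[OF cp_bij] by simp
  finally show ?case .
next
  case (step2 i)
  have "gpow g (- (i - 1)) (\<gamma> x y) = gpow g ((-i) + 1) (\<gamma> x y)" by simp
  also have "\<dots> = g (gpow g (-i) (\<gamma> x y))" by (rule gpow_succ[OF cp_bij])
  also have "\<dots> = g (\<gamma> (gpow g i x) y)" using step2 by simp
  also have "\<dots> = \<gamma> (gpow g (i - 1) x) y" using cp_gC gpow_pred[OF cp_bij] by simp
  finally show ?case .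
qed

lemma Rad_add: "a \<in> Rad \<gamma> \<Longrightarrow> b \<in> Rad \<gamma> \<Longrightarrow> a + b \<in> Rad \<gamma>"
  by (simp add: Rad_def cp_addL)
lemma Rad_diff: "a \<in> Rad \<gamma> \<Longrightarrow> b \<in> Rad \<gamma> \<Longrightarrow> a - b \<in> Rad \<gamma>"
  by (simp add: Rad_def cp_diffL)


lemma Ssum_add: "Ssum g (m + m') x = Ssum g m x + Ssum g m' ((g ^^ m) x)"
proof (induction m')
  case 0 then show ?case by (simp add: Ssum_def)
next
  case (Suc m')
  have "Ssum g (m + Suc m') x = Ssum g (m + m') x + (g ^^ (m + m')) x" by (simp add: Ssum_def)
  also have "(g ^^ (m + m')) x = (g ^^ m') ((g ^^ m) x)" by (metis funpow_add comp_apply add.commute)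
  finally show ?case using Suc by (simp add: Ssum_def add.assoc)
qed

lemma Ssum_0[simp]: "Ssum g 0 x = 0" by (simp add: Ssum_def)

lemma Rad_0: "0 \<in> Rad \<gamma>" by (simp add: Rad_def)

lemma R_add: "\<forall>x. Ssum g m x \<in> Rad \<gamma> \<Longrightarrow> \<forall>x. Ssum g m' x \<in> Rad \<gamma> \<Longrightarrow> \<forall>x. Ssum g (m + m') x \<in> Rad \<gamma>"
  by (simp add: Ssum_add Rad_add)

lemma R_mult: "\<forall>x. Ssum g r x \<in> Rad \<gamma> \<Longrightarrow> \<forall>x. Ssum g (q * r) x \<in> Rad \<gamma>"
proof (induction q)
  case 0 then show ?case by (simp add: Rad_0)
next
  case (Suc q)
  then show ?case using R_add[of r "q*r"] by (simp add: add.commute)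
qed

lemma R_sub:
  assumes "\<forall>x. Ssum g m x \<in> Rad \<gamma>" "\<forall>x. Ssum g m' x \<in> Rad \<gamma>" "m' \<le> m"
  shows "\<forall>x. Ssum g (m - m') x \<in> Rad \<gamma>"
proof
  fix x
  have "surj (g ^^ m')" using bij_fn[OF cp_bij] bij_is_surj by blast
  then obtain x0 where x0: "x = (g ^^ m') x0" by (metis surj_def)
  have "Ssum g m x0 = Ssum g m' x0 + Ssum g (m - m') x" using Ssum_add[of m' "m - m'" x0] x0 assms(3) by simp
  then have "Ssum g (m - m') x = Ssum g m x0 - Ssum g m' x0" by (simp add: algebra_simps)
  then show "Ssum g (m - m') x \<in> Rad \<gamma>" using assms Rad_diff by simp
qed

lemma r_cp_iff:
  assumes n: "0 < n"
  shows "(\<forall>x. Ssum g n x \<in> Rad \<gamma>) \<longleftrightarrow> r_cp g \<gamma> dvd n"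
proof -
  define R where "R m = (\<forall>x. Ssum g m x \<in> Rad \<gamma>)" for m
  have rdef: "r_cp g \<gamma> = (if \<exists>r>0. R r then (LEAST r. 0 < r \<and> R r) else 0)"
    by (simp only: r_cp_def R_def Ssum_def)
  show ?thesis
  proof
    assume Rn: "\<forall>x. Ssum g n x \<in> Rad \<gamma>"
    then have ex: "\<exists>r>0. R r" using n R_def by blast
    define r0 where "r0 = (LEAST r. 0 < r \<and> R r)"
    have r0: "0 < r0 \<and> R r0" unfolding r0_def by (rule LeastI_ex) (use ex in blast)
    have "R (n div r0 * r0)" using r0 R_mult R_def by blast
    moreover have "n div r0 * r0 \<le> n" by simp
    ultimately have "R (n - n div r0 * r0)" using R_sub Rn R_def by blast
    moreover have "n - n div r0 * r0 = n mod r0" by (simp add: minus_div_mult_eq_mod)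
    ultimately have Rm: "R (n mod r0)" by simp
    have "n mod r0 = 0"
    proof (rule ccontr)
      assume "n mod r0 \<noteq> 0"
      then have "(LEAST r. 0 < r \<and> R r) \<le> n mod r0" using Rm by (intro Least_le) simp
      then have "r0 \<le> n mod r0" by (simp add: r0_def[symmetric])
      moreover have "n mod r0 < r0" using r0 by simp
      ultimately show False by simp
    qed
    then show "r_cp g \<gamma> dvd n" using rdef ex r0_def by (simp add: dvd_eq_mod_eq_0)
  next
    assume d: "r_cp g \<gamma> dvd n"
    have ex: "\<exists>r>0. R r"
    proof (rule ccontr)
      assume "\<not> ?thesis"
      then have "r_cp g \<gamma> = 0" unfolding rdef by (rule if_not_P)
      then show False using d n by simp
    qed
    define r0 where "r0 = (LEAST r. 0 < r \<and> R r)"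
    have r0: "0 < r0 \<and> R r0" unfolding r0_def by (rule LeastI_ex) (use ex in blast)
    have "r_cp g \<gamma> = r0" using rdef ex r0_def by simp
    then obtain q where "n = r0 * q" using d by (auto elim: dvdE)
    then have "n = q * r0" by simp
    then show "\<forall>x. Ssum g n x \<in> Rad \<gamma>" using R_mult r0 R_def by blast
  qed
qed

end

lemma perm_ord_iff:
  assumes n: "0 < n"
  shows "(g ^^ n = id) \<longleftrightarrow> perm_ord g dvd n"
proof
  assume gn: "g ^^ n = id"
  then have ex: "\<exists>r>0. g ^^ r = id" using n by blast
  define r0 where "r0 = (LEAST r. 0 < r \<and> g ^^ r = id)"
  have r0: "0 < r0 \<and> g ^^ r0 = id" unfolding r0_def by (rule LeastI_ex) (use ex in blast)
  have m: "g ^^ (r0 * (n div r0)) = id" using r0 by (simp add: funpow_mult[symmetric])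
  have "n = n mod r0 + r0 * (n div r0)" by simp
  then have "g ^^ n = g ^^ (n mod r0) \<circ> g ^^ (r0 * (n div r0))" by (metis funpow_add)
  then have gm: "g ^^ (n mod r0) = id" using gn m by simp
  have "n mod r0 = 0"
  proof (rule ccontr)
    assume "n mod r0 \<noteq> 0"
    then have "(LEAST r. 0 < r \<and> g ^^ r = id) \<le> n mod r0" using gm by (intro Least_le) simp
    then have "r0 \<le> n mod r0" by (simp add: r0_def[symmetric])
    moreover have "n mod r0 < r0" using r0 by simp
    ultimately show False by simp
  qed
  then show "perm_ord g dvd n" using ex r0_def by (simp add: perm_ord_def dvd_eq_mod_eq_0)
next
  assume d: "perm_ord g dvd n"
  have ex: "\<exists>r>0. g ^^ r = id"
  proof (rule ccontr)
    assume "\<not> ?thesis"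
    then have "perm_ord g = 0" unfolding perm_ord_def by (rule if_not_P)
    then show False using d n by simp
  qed
  define r0 where "r0 = (LEAST r. 0 < r \<and> g ^^ r = id)"
  have r0: "0 < r0 \<and> g ^^ r0 = id" unfolding r0_def by (rule LeastI_ex) (use ex in blast)
  have "perm_ord g = r0" using ex r0_def by (simp add: perm_ord_def)
  then obtain q where "n = r0 * q" using d by (auto elim: dvdE)
  then show "g ^^ n = id" using r0 by (simp add: funpow_mult[symmetric])
qed


lemma S_Suc: "Ssum g (Suc m) x = Ssum g m x + (g^^m) x" by (simp add: Ssum_def)


context
  fixes g :: "'a::ab_group_add \<Rightarrow> 'a" and \<gamma> :: "'a \<Rightarrow> 'a \<Rightarrow> 'a"
  assumes cp: "construction_pair g \<gamma>"
begin

lemma mult_snd_alt: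
  "mult_snd g \<gamma> i j x y = gpow g (-j) x + y + sum (\<lambda>k. \<gamma> (gpow g k x) y) (Ival (i+j) (-j))"
  by (simp add: mult_snd_def cp_gpow_gamma[OF cp])

lemma ivl_insert_int: "a \<le> b \<Longrightarrow> {a..<b+1} = insert b {(a::int)..<b}"
  by auto

lemma block:
  "sum (\<lambda>k. \<gamma> (gpow g k x) y) {a..<a + int n} = \<gamma> (Ssum g n (gpow g a x)) y"
proof (induction n)
  case 0 then show ?case by (simp add: Ssum_0[OF cp] cp_zeroL[OF cp])
next
  case (Suc n)
  have "{a..<a + int (Suc n)} = insert (a + int n) {a..<a + int n}"
    using ivl_insert_int[of a "a + int n"] by (simp add: ac_simps)
  then have "sum (\<lambda>k. \<gamma> (gpow g k x) y) {a..<a + int (Suc n)}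
      = \<gamma> (gpow g (a + int n) x) y + sum (\<lambda>k. \<gamma> (gpow g k x) y) {a..<a + int n}" by simp
  also have "gpow g (a + int n) x = (g ^^ n) (gpow g a x)"
    using gpow_add[OF cp_bij[OF cp], of "int n" a x] by (simp add: add.commute)
  finally show ?case using Suc by (simp add: Ssum_def cp_addL[OF cp] add.commute)
qed

lemma core:
  assumes n: "0 < n"
  shows "(\<forall>i j i' j' x y. int n dvd (i' - i) \<and> int n dvd (j' - j) \<longrightarrow>
            mult_snd g \<gamma> i j x y = mult_snd g \<gamma> i' j' x y)
         \<longleftrightarrow> (g ^^ n = id \<and> (\<forall>x. Ssum g n x \<in> Rad \<gamma>))"
proof
  assume H: "\<forall>i j i' j' x y. int n dvd (i' - i) \<and> int n dvd (j' - j) \<longrightarrow>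
            mult_snd g \<gamma> i j x y = mult_snd g \<gamma> i' j' x y"
  have R: "Ssum g n x \<in> Rad \<gamma>" for x
  proof -
    have "\<gamma> (Ssum g n x) y = 0" for y
    proof -
      have "mult_snd g \<gamma> (int n) 0 x y = mult_snd g \<gamma> 0 0 x y" using H by simp
      then have "sum (\<lambda>k. \<gamma> (gpow g k x) y) (Ival (int n) 0) = 0"
        by (simp add: mult_snd_alt Ival_def)
      then have "sum (\<lambda>k. \<gamma> (gpow g k x) y) {0..<0 + int n} = 0" using n by (simp add: Ival_def)
      then show ?thesis using block[of x y 0 n] by simp
    qed
    then show ?thesis by (simp add: Rad_def)
  qed
  have G: "(g ^^ n) x = x" for x
  proof -
    have "mult_snd g \<gamma> 0 (int n) x 0 = mult_snd g \<gamma> 0 0 x 0" using H by simp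
    then have "gpow g (- int n) x = x" by (simp add: mult_snd_alt Ival_def cp_zeroR[OF cp])
    then have "gpow g (int n) (gpow g (- int n) x) = gpow g (int n) x" by simp
    then show ?thesis using gpow_inv_cancel[OF cp_bij[OF cp], of "int n" x] by simp
  qed
  show "g ^^ n = id \<and> (\<forall>x. Ssum g n x \<in> Rad \<gamma>)" using R G by auto
next
  assume A: "g ^^ n = id \<and> (\<forall>x. Ssum g n x \<in> Rad \<gamma>)"
  show "\<forall>i j i' j' x y. int n dvd (i' - i) \<and> int n dvd (j' - j) \<longrightarrow>
            mult_snd g \<gamma> i j x y = mult_snd g \<gamma> i' j' x y"
  proof (intro allI impI)
    fix i j i' j' x y
    assume d: "int n dvd (i' - i) \<and> int n dvd (j' - j)"
    then obtain t s where t: "i' = i + t * int n" and s: "j' = j + s * int n"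
      by (metis dvdE add.commute diff_add_cancel mult.commute)
    have pg: "gpow g (k + int n) x = gpow g k x" for k
      using gpow_add[OF cp_bij[OF cp], of k "int n" x] A by simp
    have g1: "gpow g (-j') x = gpow g (-j) x"
      using periodic_ext[of "\<lambda>k. gpow g k x" "int n" "-j" "-s", OF pg] s by (simp add: algebra_simps)
    define W where "W a b = sum (\<lambda>k. \<gamma> (gpow g k x) y) (Ival a b)" for a b
    have tor: "\<And>k. \<gamma> (gpow g k x) y + \<gamma> (gpow g k x) y = 0" using cp_tor[OF cp] by simp
    have pW: "W (a + int n) b = W a b" for a b
    proof -
      have "W (a + int n) b = W (a + int n) a + W a b"
        unfolding W_def by (rule Ival_cocycle[OF tor])
      moreover have "W (a + int n) a = 0"
        using block[of x y a n] A Ival_sym[of "a + int n" a] by (simp add: W_def Ival_def Rad_def)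
      ultimately show ?thesis by simp
    qed
    have pW1: "W (a + t * int n) b = W a b" for a b t
      using periodic_ext[of "\<lambda>a. W a b" "int n" a t] pW by simp
    have symW: "W a b = W b a" for a b by (simp add: W_def Ival_sym)
    have "W (i' + j') (- j') = W ((i + j) + (t + s) * int n) (-j + (-s) * int n)"
      using t s by (simp add: algebra_simps)
    also have "\<dots> = W (i + j) (-j + (-s) * int n)" by (rule pW1)
    also have "\<dots> = W (-j) (i + j)" using pW1 symW by metis
    also have "\<dots> = W (i + j) (-j)" by (rule symW)
    finally show "mult_snd g \<gamma> i j x y = mult_snd g \<gamma> i' j' x y"
      using g1 by (simp add: mult_snd_alt W_def)
  qed
qed

end


theorem mainTheorem1:
  fixes g :: "'a::ab_group_add \<Rightarrow> 'a" and \<gamma> :: "'a \<Rightarrow> 'a \<Rightarrow> 'a"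
    and C :: "('c, 'd) monoid_scheme" and b :: 'c
  assumes cp: "construction_pair g \<gamma>"
    and grp: "group C"
    and b: "b \<in> carrier C"
    and cyc: "carrier C = {b [^]\<^bsub>C\<^esub> (i::int) | i. True}"
  shows "((\<forall>i j i' j' x y.
              b [^]\<^bsub>C\<^esub> i = b [^]\<^bsub>C\<^esub> i' \<and> b [^]\<^bsub>C\<^esub> j = b [^]\<^bsub>C\<^esub> j' \<longrightarrow>
              (b [^]\<^bsub>C\<^esub> (i + j), mult_snd g \<gamma> i j x y)
                = (b [^]\<^bsub>C\<^esub> (i' + j'), mult_snd g \<gamma> i' j' x y))
          \<longleftrightarrow> (infinite (carrier C) \<or>
               (finite (carrier C) \<and> perm_ord g dvd card (carrier C) \<and>
                (\<forall>x. (\<Sum>k<card (carrier C). (g ^^ k) x) \<in> Rad \<gamma>))))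
       \<and> ((infinite (carrier C) \<or>
               (finite (carrier C) \<and> perm_ord g dvd card (carrier C) \<and>
                (\<forall>x. (\<Sum>k<card (carrier C). (g ^^ k) x) \<in> Rad \<gamma>)))
          \<longleftrightarrow> (infinite (carrier C) \<or>
               (finite (carrier C) \<and> perm_ord g dvd card (carrier C) \<and> r_cp g \<gamma> dvd card (carrier C))))"
proof -
  define n where "n = card (carrier C)"
  have gen: "generate C {b} = carrier C"
    using group.generate_pow[OF grp b] cyc by auto
  have ordn: "group.ord C b = n"
    using group.generate_pow_card[OF grp b] gen n_def by simp
  have eq: "b [^]\<^bsub>C\<^esub> i = b [^]\<^bsub>C\<^esub> i' \<longleftrightarrow> int n dvd (i' - i)" for i i' :: int
    using group.int_pow_eq[OF grp b] ordn by simp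
  have Seq: "(\<Sum>k<n. (g ^^ k) x) = Ssum g n x" for x by (simp add: Ssum_def)
  show ?thesis
  proof (cases "finite (carrier C)")
    case False
    then have n0: "n = 0" by (simp add: n_def)
    have "(\<forall>i j i' j' x y.
              b [^]\<^bsub>C\<^esub> i = b [^]\<^bsub>C\<^esub> i' \<and> b [^]\<^bsub>C\<^esub> j = b [^]\<^bsub>C\<^esub> j' \<longrightarrow>
              (b [^]\<^bsub>C\<^esub> (i + j), mult_snd g \<gamma> i j x y)
                = (b [^]\<^bsub>C\<^esub> (i' + j'), mult_snd g \<gamma> i' j' x y))"
    proof (intro allI impI)
      fix i j i' j' :: int and x y
      assume h: "b [^]\<^bsub>C\<^esub> i = b [^]\<^bsub>C\<^esub> i' \<and> b [^]\<^bsub>C\<^esub> j = b [^]\<^bsub>C\<^esub> j'"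
      have "int n dvd (i' - i)" using h eq[of i i'] by (simp only:)
      moreover have "int n dvd (j' - j)" using h eq[of j j'] by (simp only:)
      ultimately have "i' = i" "j' = j" using n0 by simp_all
      then show "(b [^]\<^bsub>C\<^esub> (i + j), mult_snd g \<gamma> i j x y)
                = (b [^]\<^bsub>C\<^esub> (i' + j'), mult_snd g \<gamma> i' j' x y)" by simp
    qed
    then show ?thesis using False by blast
  next
    case True
    then have n0: "0 < n" using b n_def by (simp add: card_gt_0_iff) blast
    have L: "(\<forall>i j i' j' x y.
              b [^]\<^bsub>C\<^esub> i = b [^]\<^bsub>C\<^esub> i' \<and> b [^]\<^bsub>C\<^esub> j = b [^]\<^bsub>C\<^esub> j' \<longrightarrow>
              (b [^]\<^bsub>C\<^esub> (i + j), mult_snd g \<gamma> i j x y)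
                = (b [^]\<^bsub>C\<^esub> (i' + j'), mult_snd g \<gamma> i' j' x y))
          \<longleftrightarrow> (\<forall>i j i' j' x y. int n dvd (i' - i) \<and> int n dvd (j' - j) \<longrightarrow>
            mult_snd g \<gamma> i j x y = mult_snd g \<gamma> i' j' x y)"
    proof -
      have "int n dvd (i' - i) \<Longrightarrow> int n dvd (j' - j) \<Longrightarrow> int n dvd ((i' + j') - (i + j))" for i j i' j' :: int
      proof -
        assume "int n dvd (i' - i)" "int n dvd (j' - j)"
        then have "int n dvd ((i' - i) + (j' - j))" by (rule dvd_add)
        moreover have "(i' - i) + (j' - j) = (i' + j') - (i + j)" by simp
        ultimately show ?thesis by simp
      qed
      then show ?thesis using eq by blast
    qed
    have c: "(\<forall>i j i' j' x y. int n dvd (i' - i) \<and> int n dvd (j' - j) \<longrightarrow>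
            mult_snd g \<gamma> i j x y = mult_snd g \<gamma> i' j' x y) \<longleftrightarrow> (perm_ord g dvd n \<and> (\<forall>x. Ssum g n x \<in> Rad \<gamma>))"
      using core[OF cp n0] perm_ord_iff[OF n0, of g] by blast
    have r: "(\<forall>x. Ssum g n x \<in> Rad \<gamma>) \<longleftrightarrow> r_cp g \<gamma> dvd n" by (rule r_cp_iff[OF cp n0])
    show ?thesis
      unfolding n_def[symmetric] Seq using L c r True by blast
  qed
qed


end
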